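(* Let $A$ be a real symmetric $n\times n$ matrix such that the graph $\mathcal{G}(A)$ is connected and all nonzero off-diagonal entries of $A$ have the same sign. Let $S\subseteq\{1,\dots,n\}$ and $Z=\{{\bf e}_j : j\in S\}$. Then the real linear span of $P(A,Z)$ is contained in $\mathcal{L}(A,Z)$.
   Context: ${\bf e}_j$ is the $j$th standard basis vector of $\mathbb{R}^n$. For a real symmetric $n\times n$ matrix $A=[a_{kj}]$, $\mathcal{G}(A)$ is the simple graph on $\{1,\dots,n\}$ with edges $\{kj: a_{kj}\neq0,\ k\neq j\}$. For $Z=\{{\bf z}_1,\dots,{\bf z}_s\}\subset\mathbb{R}^n$: $P(A,Z):=\{A^m{\bf z}_k{\bf z}_j^TA^\ell : 1\le k,j\le s,\ 0\le m,\ell\le n-1\}$, and $\mathcal{L}(A,Z)$ is the real Lie algebra generated by $A,{\bf z}_1{\bf z}_1^T,\dots,{\bf z}_s{\bf z}_s^T$, i.e. the smallest real vector space of matrices containing these and closed under the commutator $[X,Y]=XY-YX$. *)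

theory Defs
  imports "HOL-Analysis.Analysis"
begin

definition outer :: "real^'n \<Rightarrow> real^'n \<Rightarrow> real^'n^'n" where
  "outer u v = (\<chi> i j. u $ i * v $ j)"

definition matpow :: "real^'n^'n \<Rightarrow> nat \<Rightarrow> real^'n^'n" where
  "matpow A m = ((\<lambda>X. A ** X) ^^ m) (mat 1)"

definition commutator :: "real^'n^'n \<Rightarrow> real^'n^'n \<Rightarrow> real^'n^'n" where
  "commutator X Y = X ** Y - Y ** X"

definition graph_edges :: "real^'n^'n \<Rightarrow> ('n \<times> 'n) set" where
  "graph_edges A = {(k, j). k \<noteq> j \<and> A $ k $ j \<noteq> 0}"

definition graph_connected :: "real^'n^'n \<Rightarrow> bool" where
  "graph_connected A \<longleftrightarrow> (\<forall>k j. (k, j) \<in> (graph_edges A)\<^sup>*)"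

definition offdiag_same_sign :: "real^'n^'n \<Rightarrow> bool" where
  "offdiag_same_sign A \<longleftrightarrow>
     (\<forall>k j. k \<noteq> j \<longrightarrow> A $ k $ j \<ge> 0) \<or> (\<forall>k j. k \<noteq> j \<longrightarrow> A $ k $ j \<le> 0)"

definition Pset :: "real^'n^'n \<Rightarrow> (real^'n) set \<Rightarrow> (real^'n^'n) set" where
  "Pset A Z = {matpow A m ** outer zk zj ** matpow A l | zk zj m l.
      zk \<in> Z \<and> zj \<in> Z \<and> m \<le> CARD('n) - 1 \<and> l \<le> CARD('n) - 1}"

inductive_set lie_gen :: "(real^'n^'n) set \<Rightarrow> (real^'n^'n) set" for G where
  gen: "X \<in> G \<Longrightarrow> X \<in> lie_gen G"
| zero: "0 \<in> lie_gen G"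
| add: "X \<in> lie_gen G \<Longrightarrow> Y \<in> lie_gen G \<Longrightarrow> X + Y \<in> lie_gen G"
| scale: "X \<in> lie_gen G \<Longrightarrow> c *\<^sub>R X \<in> lie_gen G"
| bracket: "X \<in> lie_gen G \<Longrightarrow> Y \<in> lie_gen G \<Longrightarrow> commutator X Y \<in> lie_gen G"

definition LieAZ :: "real^'n^'n \<Rightarrow> (real^'n) set \<Rightarrow> (real^'n^'n) set" where
  "LieAZ A Z = lie_gen (insert A ((\<lambda>z. outer z z) ` Z))"

end

theory Submission
  imports Defs
begin

lemma sum_only: "(\<And>x. x \<noteq> j \<Longrightarrow> f x = 0) \<Longrightarrow> (\<Sum>x\<in>UNIV. f x) = (f (j::'n::finite) :: real)"
proof -
  assume h: "\<And>x. x \<noteq> j \<Longrightarrow> f x = 0"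
  have "sum f UNIV = f j + sum f (UNIV - {j})" by (rule sum.remove) auto
  moreover have "sum f (UNIV - {j}) = 0" using h by (intro sum.neutral) auto
  ultimately show ?thesis by simp
qed

lemma E_comp[simp]: "outer (axis j 1) (axis k 1) $ a $ b = (if a = j \<and> b = k then 1 else (0::real))"
  by (simp add: outer_def axis_def)

lemma outer_comp2: "outer u v $ a $ b = u $ a * v $ b"
  by (simp add: outer_def)

lemma Emul_left[simp]: "(outer (axis j 1) (axis k 1) ** (Y::real^'n^'n)) $ a $ b = (if a = j then Y $ k $ b else 0)"
  unfolding matrix_matrix_mult_def by (subst sum_only[of k]) auto

lemma Emul_right[simp]: "((Y::real^'n^'n) ** outer (axis j 1) (axis k 1)) $ a $ b = (if b = k then Y $ a $ j else 0)"
  unfolding matrix_matrix_mult_def by (subst sum_only[of j]) auto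

lemma id_left: "outer (axis j 1) (axis j 1) ** X = (1/2) *\<^sub>R (commutator (outer (axis j 1) (axis j 1)) (commutator (outer (axis j 1) (axis j 1)) X) + commutator (outer (axis j 1) (axis j 1)) X) + (X$j$j) *\<^sub>R outer (axis j 1) (axis j 1)"
  by (simp add: vec_eq_iff commutator_def)

lemma id_right: "X ** outer (axis j 1) (axis j 1) = (1/2) *\<^sub>R (commutator (outer (axis j 1) (axis j 1)) (commutator (outer (axis j 1) (axis j 1)) X) - commutator (outer (axis j 1) (axis j 1)) X) + (X$j$j) *\<^sub>R outer (axis j 1) (axis j 1)"
  by (simp add: vec_eq_iff commutator_def)

lemma id_rightA:
  assumes "\<forall>a b. a \<noteq> j \<longrightarrow> (Y::real^'n^'n) $ a $ b = 0"
  shows "Y ** A = A$j$j *\<^sub>R Y - outer (axis j 1) (axis j 1) ** commutator A Y"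
proof -
  have "(A ** Y) $ j $ b = A$j$j * Y$j$b" for b
    unfolding matrix_matrix_mult_def using assms by (subst sum_only[of j]) auto
  moreover have "(Y ** A) $ i $ b = 0" if "i \<noteq> j" for i b
    unfolding matrix_matrix_mult_def using assms that by simp
  ultimately show ?thesis using assms
    by (auto simp add: vec_eq_iff commutator_def)
qed

lemma L_diff: "X \<in> lie_gen G \<Longrightarrow> Y \<in> lie_gen G \<Longrightarrow> X - Y \<in> lie_gen G"
proof -
  assume "X \<in> lie_gen G" "Y \<in> lie_gen G"
  hence "X + (-1) *\<^sub>R Y \<in> lie_gen G" by (intro lie_gen.add lie_gen.scale)
  thus ?thesis by simp
qed

lemma L_left:
  assumes "outer (axis j 1) (axis j 1) \<in> lie_gen G" "X \<in> lie_gen G"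
  shows "outer (axis j 1) (axis j 1) ** X \<in> lie_gen G"
  apply (subst id_left)
  using assms by (intro lie_gen.add lie_gen.scale lie_gen.bracket)

lemma L_right:
  assumes "outer (axis j 1) (axis j 1) \<in> lie_gen G" "X \<in> lie_gen G"
  shows "X ** outer (axis j 1) (axis j 1) \<in> lie_gen G"
  apply (subst id_right)
  using assms by (intro lie_gen.add lie_gen.scale lie_gen.bracket L_diff)

lemma L_rightA:
  assumes "A \<in> lie_gen G" "outer (axis j 1) (axis j 1) \<in> lie_gen G" "Y \<in> lie_gen G"
    "\<forall>a b. a \<noteq> j \<longrightarrow> (Y::real^'n^'n) $ a $ b = 0"
  shows "Y ** A \<in> lie_gen G"
  apply (subst id_rightA[OF assms(4)])
  using assms by (intro lie_gen.scale lie_gen.bracket L_diff L_left)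

lemma rows_mul: "\<forall>a b. a \<noteq> j \<longrightarrow> (Y::real^'n^'n) $ a $ b = 0 \<Longrightarrow> \<forall>a b. a \<noteq> j \<longrightarrow> (Y ** M) $ a $ b = 0"
  unfolding matrix_matrix_mult_def by simp

lemma matpow_Suc: "matpow A (Suc m) = A ** matpow A m"
  by (simp add: matpow_def)

lemma matpow_comm: "matpow A m ** A = A ** matpow A m"
proof (induction m)
  case 0
  show ?case by (simp add: matpow_def)
next
  case (Suc m)
  have "matpow A (Suc m) ** A = A ** (matpow A m ** A)"
    by (simp add: matpow_Suc matrix_mul_assoc)
  also have "\<dots> = A ** matpow A (Suc m)" by (simp add: Suc.IH matpow_Suc)
  finally show ?case .
qed

lemma L_G:
  assumes "A \<in> lie_gen G" "outer (axis j 1) (axis j 1) \<in> lie_gen G" "Y \<in> lie_gen G"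
    "\<forall>a b. a \<noteq> j \<longrightarrow> (Y::real^'n^'n) $ a $ b = 0"
  shows "matpow A m ** Y ** matpow A l \<in> lie_gen G"
proof -
  have R: "Y ** matpow A l \<in> lie_gen G \<and> (\<forall>a b. a \<noteq> j \<longrightarrow> (Y ** matpow A l) $ a $ b = 0)" for l
  proof (induction l)
    case 0
    then show ?case using assms by (simp add: matpow_def)
  next
    case (Suc l)
    have e: "Y ** matpow A (Suc l) = (Y ** matpow A l) ** A"
      by (simp add: matpow_Suc matpow_comm[symmetric] matrix_mul_assoc)
    show ?case unfolding e using Suc assms(1,2) L_rightA rows_mul by blast
  qed
  show ?thesis
  proof (induction m arbitrary: l)
    case 0
    then show ?case using R by (simp add: matpow_def)
  next
    case (Suc m)
    define W where "W = matpow A m ** Y ** matpow A l"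
    have e1: "matpow A (Suc m) ** Y ** matpow A l = commutator A W + W ** A"
      by (simp add: W_def commutator_def matpow_Suc matrix_mul_assoc)
    have e2: "W ** A = matpow A m ** Y ** matpow A (Suc l)"
      by (simp add: W_def matpow_Suc matpow_comm[symmetric] matrix_mul_assoc)
    show ?case unfolding e1 e2 using Suc assms(1)
      by (intro lie_gen.add lie_gen.bracket) (auto simp: W_def)
  qed
qed

lemma E_off:
  fixes A :: "real^'n^'n"
  assumes symm: "transpose A = A" and conn: "graph_connected A" and sgn: "offdiag_same_sign A"
    and LA: "A \<in> lie_gen G" and Lj: "outer (axis j 1) (axis j 1) \<in> lie_gen G"
    and Lk: "outer (axis k 1) (axis k 1) \<in> lie_gen G"
  shows "outer (axis j 1) (axis k 1) \<in> lie_gen G"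
proof -
  have sym: "A $ a $ b = A $ b $ a" for a b
    using symm by (metis transpose_def vec_lambda_beta)
  define \<sigma> where "\<sigma> = (if \<forall>k j. k \<noteq> j \<longrightarrow> A$k$j \<ge> 0 then 1 else -1::real)"
  have sig: "a \<noteq> b \<Longrightarrow> \<sigma> * A$a$b \<ge> 0" for a b
    using sgn unfolding offdiag_same_sign_def \<sigma>_def by auto
  have sig2: "\<sigma> = 1 \<or> \<sigma> = -1" unfolding \<sigma>_def by auto
  define c where "c = (\<Sum>a\<in>UNIV. \<bar>A$a$a\<bar>)"
  have cge: "\<bar>A$a$a\<bar> \<le> c" for a
    unfolding c_def by (rule member_le_sum) auto
  define N where "N = \<sigma> *\<^sub>R A + c *\<^sub>R mat 1"
  have Ncomp: "N $ a $ b = \<sigma> * A$a$b + (if a = b then c else 0)" for a b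
    by (simp add: N_def mat_def)
  have Nnn: "0 \<le> N$a$b" for a b
  proof (cases "a = b")
    case True
    then show ?thesis using cge[of a] sig2 by (auto simp: Ncomp)
  next
    case False
    then show ?thesis using sig[OF False] by (simp add: Ncomp)
  qed
  define p where "p d = ((\<lambda>v. N *v v) ^^ d) (axis j 1)" for d
  have pSuc: "p (Suc d) = N *v p d" for d by (simp add: p_def)
  have pnn: "0 \<le> p d $ a" for d a
  proof (induction d arbitrary: a)
    case 0 then show ?case by (simp add: p_def axis_def)
  next
    case (Suc d) then show ?case
      by (simp add: pSuc matrix_vector_mult_def Nnn sum_nonneg)
  qed
  have reach: "(j, b) \<in> (graph_edges A)\<^sup>* \<Longrightarrow> \<exists>d. p d $ b > 0" for b
  proof (induction rule: rtrancl_induct)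
    case base
    then show ?case by (rule exI[of _ 0]) (simp add: p_def axis_def)
  next
    case (step b e)
    then obtain d where d: "p d $ b > 0" by blast
    from step(2) have be: "b \<noteq> e" "A $ b $ e \<noteq> 0" unfolding graph_edges_def by auto
    have "N $ e $ b > 0"
      using sig[of e b] be sym[of e b] sig2 by (auto simp: Ncomp)
    hence "N $ e $ b * p d $ b > 0" using d by simp
    also have "N $ e $ b * p d $ b \<le> (\<Sum>x\<in>UNIV. N $ e $ x * p d $ x)"
      by (rule member_le_sum[where f="\<lambda>x. N $ e $ x * p d $ x"]) (auto simp: Nnn pnn)
    finally show ?case by (intro exI[of _ "Suc d"]) (simp add: pSuc matrix_vector_mult_def)
  qed
  have rows: "\<forall>a b. a \<noteq> j \<longrightarrow> outer (axis j 1) v $ a $ b = 0" for v :: "real^'n"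
    by (simp add: outer_def axis_def)
  have inL: "outer (axis j 1) (p d) \<in> lie_gen G" for d
  proof (induction d)
    case 0 then show ?case using Lj by (simp add: p_def)
  next
    case (Suc d)
    have e: "outer (axis j 1) (N *v v) = \<sigma> *\<^sub>R (outer (axis j 1) v ** A) + c *\<^sub>R outer (axis j 1) v" for v
    proof -
      have "(\<Sum>x\<in>UNIV. N $ b $ x * v $ x) = \<sigma> * (\<Sum>x\<in>UNIV. v $ x * A $ x $ b) + c * v $ b" for b
      proof -
        have "(\<Sum>x\<in>UNIV. N $ b $ x * v $ x) = (\<Sum>x\<in>UNIV. \<sigma> * (v $ x * A $ x $ b) + (if x = b then c * v $ b else 0))"
          by (rule sum.cong) (auto simp: Ncomp sym[of b] algebra_simps)
        also have "\<dots> = \<sigma> * (\<Sum>x\<in>UNIV. v $ x * A $ x $ b) + c * v $ b"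
          by (simp add: sum.distrib sum_distrib_left)
        finally show ?thesis .
      qed
      then show ?thesis
        by (simp add: vec_eq_iff outer_def matrix_vector_mult_def matrix_matrix_mult_def
            sum_distrib_left algebra_simps)
    qed
    show ?case unfolding pSuc e using Suc LA Lj rows
      by (intro lie_gen.add lie_gen.scale L_rightA) auto
  qed
  from conn have "(j, k) \<in> (graph_edges A)\<^sup>*" unfolding graph_connected_def by blast
  from reach[OF this] obtain d where d: "p d $ k > 0" by blast
  have "outer (axis j 1) (p d) ** outer (axis k 1) (axis k 1) \<in> lie_gen G"
    using L_right[OF Lk inL] .
  moreover have "outer (axis j 1) (p d) ** outer (axis k 1) (axis k 1) = (p d $ k) *\<^sub>R outer (axis j 1) (axis k 1)"
    by (simp add: vec_eq_iff) (simp add: outer_comp2 axis_def)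
  ultimately have "(1 / p d $ k) *\<^sub>R ((p d $ k) *\<^sub>R outer (axis j 1) (axis k 1)) \<in> lie_gen G"
    by (metis lie_gen.scale)
  then show ?thesis using d by simp
qed

theorem lemma3p6:
  fixes A :: "real^'n^'n" and S :: "'n set"
  assumes "transpose A = A"
    and "graph_connected A"
    and "offdiag_same_sign A"
  shows "span (Pset A ((\<lambda>j. axis j 1) ` S)) \<subseteq> LieAZ A ((\<lambda>j. axis j 1) ` S)"
proof (rule span_minimal)
  let ?G = "insert A ((\<lambda>z. outer z z) ` ((\<lambda>j. axis j 1) ` S))"
  have LA: "A \<in> lie_gen ?G" by (rule lie_gen.gen) simp
  have LE: "j \<in> S \<Longrightarrow> outer (axis j 1) (axis j 1) \<in> lie_gen ?G" for j
    by (rule lie_gen.gen) auto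
  show "subspace (LieAZ A ((\<lambda>j. axis j 1) ` S))"
    unfolding subspace_def LieAZ_def by (simp add: lie_gen.zero lie_gen.add lie_gen.scale)
  show "Pset A ((\<lambda>j. axis j 1) ` S) \<subseteq> LieAZ A ((\<lambda>j. axis j 1) ` S)"
  proof
    fix X assume "X \<in> Pset A ((\<lambda>j. axis j 1) ` S)"
    then obtain zk zj m l where z: "zk \<in> (\<lambda>j. axis j 1) ` S" "zj \<in> (\<lambda>j. axis j 1) ` S"
      and X0: "X = matpow A m ** outer zk zj ** matpow A l"
      unfolding Pset_def mem_Collect_eq by (elim exE conjE) simp
    from z(1) obtain k where k: "k \<in> S" "zk = axis k 1" by (rule imageE) simp
    from z(2) obtain j where j: "j \<in> S" "zj = axis j 1" by (rule imageE) simp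
    have kj: "k \<in> S" "j \<in> S" using k j by simp_all
    have zz: "zk = axis k 1" "zj = axis j 1" using k j by simp_all
    have X: "X = matpow A m ** outer (axis k 1) (axis j 1) ** matpow A l"
      using X0 zz by simp
    have Ekj: "outer (axis k 1) (axis j 1) \<in> lie_gen ?G"
    proof (cases "k = j")
      case True then show ?thesis using LE kj by simp
    next
      case False then show ?thesis using E_off[OF assms LA LE LE] kj by blast
    qed
    have rows: "\<forall>a b. a \<noteq> k \<longrightarrow> outer (axis k 1) (axis j 1) $ a $ b = (0::real)"
      by simp
    show "X \<in> LieAZ A ((\<lambda>j. axis j 1) ` S)"
      unfolding X LieAZ_def using L_G[OF LA LE[OF kj(1)] Ekj rows] .
  qed
qed

end
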